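(* Let $\ell>0$ and $\varepsilon\in(0,2)$. There exists a constant $C_p=C_p(\varepsilon,\ell)>0$ such that for every $\alpha\in[0,2-\varepsilon]$ and every $u\in H^1_\alpha(0,\ell)$, $$\int_0^\ell |u|^2\,dx\le C_p\int_0^\ell x^\alpha|\partial_x u|^2\,dx .$$
   Context: For $\ell>0$, the weighted spaces are: for $0\le\alpha<1$, $H^1_\alpha(0,\ell)=\{u\in L^2(0,\ell):\ \int_0^\ell x^\alpha|\partial_x u|^2\,dx<\infty,\ u(0)=u(\ell)=0\}$; for $1\le \alpha<2$, $H^1_\alpha(0,\ell)=\{u\in L^2(0,\ell):\ \int_0^\ell x^\alpha|\partial_x u|^2\,dx<\infty,\ u(\ell)=0\}$. *)

theory Defs
  imports "HOL-Analysis.Analysis"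
begin

text \<open>A function u in this space is represented by its
(locally) absolutely continuous representative on (0,l], together with its weak
derivative du: du is absolutely integrable on every compact [a,b] with 0 < a, b <= l,
and u b - u a is the integral of du over [a,b]. Moreover u is in L^2(0,l), the weighted
Dirichlet integral is finite, u l = 0, and for alpha < 1 also u 0 = 0 (as the limit from
the right at 0).\<close>

definition H1_alpha :: "real \<Rightarrow> real \<Rightarrow> (real \<Rightarrow> complex) \<Rightarrow> (real \<Rightarrow> complex) \<Rightarrow> bool" where
  "H1_alpha l \<alpha> u du \<longleftrightarrow>
     (\<forall>a b. 0 < a \<and> a \<le> b \<and> b \<le> l \<longrightarrow>
        du absolutely_integrable_on {a..b} \<and> (du has_integral (u b - u a)) {a..b}) \<and>
     (\<lambda>x. (cmod (u x))\<^sup>2) integrable_on {0<..<l} \<and>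
     (\<lambda>x. x powr \<alpha> * (cmod (du x))\<^sup>2) integrable_on {0<..<l} \<and>
     u l = 0 \<and>
     (\<alpha> < 1 \<longrightarrow> (u \<longlongrightarrow> 0) (at_right 0))"

end

theory Submission
  imports Defs
begin

lemma powr_int_bound:
  fixes x l \<gamma> :: real
  assumes x: "0 < x" "x \<le> l" and g: "1 < \<gamma>"
  shows "((\<lambda>t. t powr (-\<gamma>)) has_integral ((x powr (1-\<gamma>) - l powr (1-\<gamma>))/(\<gamma>-1))) {x..l}"
proof -
  have "((\<lambda>t. t powr (-\<gamma>)) has_integral ((\<lambda>t. t powr (1-\<gamma>)/(1-\<gamma>)) l - (\<lambda>t. t powr (1-\<gamma>)/(1-\<gamma>)) x)) {x..l}"
  proof (rule fundamental_theorem_of_calculus)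
    show "x \<le> l" using x by simp
    fix t assume t: "t \<in> {x..l}"
    then have tp: "t > 0" using x by auto
    have "((\<lambda>t. t powr (1-\<gamma>)/(1-\<gamma>)) has_real_derivative ((1-\<gamma>) * t powr (1-\<gamma>-1)/(1-\<gamma>))) (at t)"
      using DERIV_cdivide[OF has_real_derivative_powr[OF tp, of "1-\<gamma>"], of "1-\<gamma>"] by simp
    moreover have "(1-\<gamma>) * t powr (1-\<gamma>-1)/(1-\<gamma>) = t powr (-\<gamma>)" using g by simp
    ultimately show "((\<lambda>t. t powr (1-\<gamma>)/(1-\<gamma>)) has_vector_derivative t powr (-\<gamma>)) (at t within {x..l})"
      by (metis has_real_derivative_iff_has_vector_derivative has_field_derivative_at_within)
  qed
  moreover have "(\<lambda>t. t powr (1-\<gamma>)/(1-\<gamma>)) l - (\<lambda>t. t powr (1-\<gamma>)/(1-\<gamma>)) x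
      = (x powr (1-\<gamma>) - l powr (1-\<gamma>))/(\<gamma>-1)"
  proof -
    have "1 - \<gamma> = - (\<gamma> - 1)" by simp
    then show ?thesis by (simp only: diff_divide_distrib[symmetric]) (metis minus_diff_eq minus_divide_divide)
  qed
  ultimately show ?thesis by simp
qed

lemma amgm_aux:
  fixes p s d :: real
  assumes "p > 0" "s > 0"
  shows "d \<le> (s * (1/p) + p * d\<^sup>2 / s) / 2"
proof -
  have "0 \<le> (s - p*d)\<^sup>2" by simp
  then have "2 * s * p * d \<le> s\<^sup>2 + p\<^sup>2 * d\<^sup>2" by (simp add: power2_eq_square algebra_simps)
  then show ?thesis using assms by (simp add: field_simps power2_eq_square)
qed

lemma pointwise_bound:
  fixes x l \<alpha> \<gamma> :: real and u du :: "real \<Rightarrow> complex"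
  assumes x: "0 < x" "x < l" and g: "1 < \<gamma>" and a: "0 \<le> \<alpha>" "\<alpha> \<le> \<gamma>"
    and H: "H1_alpha l \<alpha> u du"
  shows "(cmod (u x))\<^sup>2 \<le> (x powr (1-\<gamma>)/(\<gamma>-1) + l) * integral {0<..<l} (\<lambda>x. x powr \<alpha> * (cmod (du x))\<^sup>2)"
proof -
  define W where "W = integral {0<..<l} (\<lambda>x. x powr \<alpha> * (cmod (du x))\<^sup>2)"
  define B where "B = x powr (1-\<gamma>)/(\<gamma>-1) + l"
  have Bpos: "B > 0" unfolding B_def using x g by (auto intro!: add_nonneg_pos divide_nonneg_pos)
  have HH: "\<forall>a b. 0 < a \<and> a \<le> b \<and> b \<le> l \<longrightarrow>
        du absolutely_integrable_on {a..b} \<and> (du has_integral (u b - u a)) {a..b}"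
    using H unfolding H1_alpha_def by blast
  have dui: "(du has_integral (u l - u x)) {x..l}"
    using HH x by auto
  have wint0: "(\<lambda>x. x powr \<alpha> * (cmod (du x))\<^sup>2) integrable_on {0<..<l}"
    using H unfolding H1_alpha_def by auto
  then have wint1: "(\<lambda>x. x powr \<alpha> * (cmod (du x))\<^sup>2) integrable_on {0..l}"
    by (simp add: integrable_on_Icc_iff_Ioo)
  have wintx: "(\<lambda>x. x powr \<alpha> * (cmod (du x))\<^sup>2) integrable_on {x..l}"
    by (rule integrable_on_subinterval[OF wint1]) (use x in auto)
  have Wx: "integral {x..l} (\<lambda>x. x powr \<alpha> * (cmod (du x))\<^sup>2) \<le> W"
  proof -
    have "integral {x..l} (\<lambda>x. x powr \<alpha> * (cmod (du x))\<^sup>2) \<le> integral {0..l} (\<lambda>x. x powr \<alpha> * (cmod (du x))\<^sup>2)"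
      by (rule integral_subset_le) (use x wintx wint1 in auto)
    then show ?thesis unfolding W_def by (simp add: integral_open_interval_real)
  qed
  have W0: "W \<ge> 0" unfolding W_def by (rule integral_nonneg[OF wint0]) auto
  have pg: "((\<lambda>t. t powr (-\<gamma>)) has_integral ((x powr (1-\<gamma>) - l powr (1-\<gamma>))/(\<gamma>-1))) {x..l}"
    by (rule powr_int_bound) (use x g in auto)
  have pa_int: "(\<lambda>t. t powr (-\<alpha>)) integrable_on {x..l}"
    by (rule integrable_continuous_interval) (use x in \<open>auto intro!: continuous_intros\<close>)
  have one: "((\<lambda>t. 1::real) has_integral (l - x)) {x..l}"
    using has_integral_const_real[of "1::real" x l] x by simp
  have IA: "integral {x..l} (\<lambda>t. t powr (-\<alpha>)) \<le> B"
  proof -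
    have "integral {x..l} (\<lambda>t. t powr (-\<alpha>)) \<le> integral {x..l} (\<lambda>t. t powr (-\<gamma>) + 1)"
    proof (rule integral_le)
      show "(\<lambda>t. t powr (-\<gamma>) + 1) integrable_on {x..l}"
        using has_integral_add[OF pg one] by blast
      fix t assume t: "t \<in> {x..l}"
      then have tp: "t > 0" using x by auto
      show "t powr (-\<alpha>) \<le> t powr (-\<gamma>) + 1"
      proof (cases "t \<le> 1")
        case True
        have "t powr (-\<alpha>) \<le> t powr (-\<gamma>)"
          using powr_mono' [of "-\<gamma>" "-\<alpha>" t] True tp a by auto
        then show ?thesis by simp
      next
        case False
        have "t powr (-\<alpha>) \<le> 1" using powr_mono[of "-\<alpha>" 0 t] False a tp by simp
        then show ?thesis using tp by (smt (verit) powr_ge_zero)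
      qed
    qed (rule pa_int)
    also have "\<dots> = (x powr (1-\<gamma>) - l powr (1-\<gamma>))/(\<gamma>-1) + (l - x)"
      using has_integral_add[OF pg one] by (simp add: integral_unique)
    also have "\<dots> \<le> B"
    proof -
      have "(x powr (1-\<gamma>) - l powr (1-\<gamma>))/(\<gamma>-1) \<le> x powr (1-\<gamma>)/(\<gamma>-1)"
        using g by (intro divide_right_mono) auto
      then show ?thesis unfolding B_def using x by linarith
    qed
    finally show ?thesis .
  qed
  have key: "cmod (u x) \<le> (s * B + W / s) / 2" if s: "s > 0" for s
  proof -
    have "u x = - integral {x..l} du" using integral_unique[OF dui] H unfolding H1_alpha_def by simp
    then have "cmod (u x) = norm (integral {x..l} du)" by simp
    also have "\<dots> \<le> integral {x..l} (\<lambda>t. (s * t powr (-\<alpha>) + t powr \<alpha> * (cmod (du t))\<^sup>2 / s) / 2)"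
    proof (rule integral_norm_bound_integral)
      show "du integrable_on {x..l}" using dui by blast
      show "(\<lambda>t. (s * t powr (-\<alpha>) + t powr \<alpha> * (cmod (du t))\<^sup>2 / s) / 2) integrable_on {x..l}"
        by (intro integrable_on_divide integrable_add integrable_on_mult_right integrable_on_divide pa_int wintx)
      fix t assume "t \<in> {x..l}"
      then have tp: "t > 0" using x by auto
      have "t powr \<alpha> > 0" using tp by simp
      from amgm_aux[OF this s, of "cmod (du t)"]
      show "norm (du t) \<le> (s * t powr (-\<alpha>) + t powr \<alpha> * (cmod (du t))\<^sup>2 / s) / 2"
        using tp by (simp add: powr_minus_divide)
    qed
    also have "\<dots> = (s * integral {x..l} (\<lambda>t. t powr (-\<alpha>)) + integral {x..l} (\<lambda>t. t powr \<alpha> * (cmod (du t))\<^sup>2) / s) / 2"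
    proof -
      have i1: "(\<lambda>t. s * t powr (-\<alpha>)) integrable_on {x..l}" by (rule integrable_on_mult_right[OF pa_int])
      have i2: "(\<lambda>t. t powr \<alpha> * (cmod (du t))\<^sup>2 / s) integrable_on {x..l}" by (rule integrable_on_divide[OF wintx])
      show ?thesis by (simp add: integral_add[OF i1 i2])
    qed
    also have "\<dots> \<le> (s * B + W / s) / 2"
      using IA Wx s by (auto intro!: add_mono mult_left_mono divide_right_mono)
    finally show ?thesis .
  qed
  show ?thesis
  proof (cases "u x = 0")
    case True then show ?thesis using Bpos W0 unfolding W_def[symmetric] B_def[symmetric] by simp
  next
    case False
    define c where "c = cmod (u x)"
    have c: "c > 0" using False c_def by simp
    have "c \<le> ((c/B) * B + W / (c/B)) / 2" using key[of "c/B"] c Bpos c_def by simp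
    then have "c \<le> (c + W * B / c) / 2" using Bpos by simp
    then have "c * c \<le> W * B" using c by (simp add: field_simps)
    then show ?thesis unfolding W_def[symmetric] B_def[symmetric] c_def[symmetric]
      by (simp add: power2_eq_square mult.commute)
  qed
qed

theorem lemma2p2:
  fixes l \<epsilon> :: real
  assumes "l > 0" and "0 < \<epsilon>" and "\<epsilon> < 2"
  shows "\<exists>C>0. \<forall>\<alpha> u du. 0 \<le> \<alpha> \<and> \<alpha> \<le> 2 - \<epsilon> \<and> H1_alpha l \<alpha> u du \<longrightarrow>
           integral {0<..<l} (\<lambda>x. (cmod (u x))\<^sup>2)
             \<le> C * integral {0<..<l} (\<lambda>x. x powr \<alpha> * (cmod (du x))\<^sup>2)"
proof -
  define \<gamma> where "\<gamma> = max (2 - \<epsilon>) (3/2)"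
  have g1: "1 < \<gamma>" and g2: "\<gamma> < 2" using assms unfolding \<gamma>_def by auto
  define C where "C = l powr (2-\<gamma>) / ((2-\<gamma>)*(\<gamma>-1)) + l * l"
  have Cpos: "C > 0" unfolding C_def using assms g1 g2
    by (intro add_nonneg_pos divide_nonneg_pos) auto
  have Bint: "((\<lambda>x. x powr (1-\<gamma>)/(\<gamma>-1) + l) has_integral C) {0<..<l}"
  proof -
    have "((\<lambda>x. x powr (1-\<gamma>)) has_integral (l powr (1-\<gamma>+1) / (1-\<gamma>+1))) {0..l}"
      by (rule has_integral_powr_from_0) (use g2 assms in auto)
    then have h0: "((\<lambda>x. x powr (1-\<gamma>)/(\<gamma>-1)) has_integral (l powr (1-\<gamma>+1) / (1-\<gamma>+1) / (\<gamma>-1))) {0..l}"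
      by (rule has_integral_divide)
    have "1-\<gamma>+1 = 2-\<gamma>" by simp
    then have "l powr (1-\<gamma>+1) / (1-\<gamma>+1) / (\<gamma>-1) = l powr (2-\<gamma>) / ((2-\<gamma>)*(\<gamma>-1))"
      by (simp only: divide_divide_eq_left)
    with h0 have h1: "((\<lambda>x. x powr (1-\<gamma>)/(\<gamma>-1)) has_integral (l powr (2-\<gamma>) / ((2-\<gamma>)*(\<gamma>-1)))) {0..l}"
      by simp
    have h2: "((\<lambda>x. l) has_integral (l*l)) {0..l}"
      using has_integral_const_real[of l 0 l] assms by simp
    show ?thesis using has_integral_add[OF h1 h2] unfolding C_def
      by (simp add: has_integral_Icc_iff_Ioo)
  qed
  show ?thesis
  proof (intro exI[of _ C] conjI allI impI Cpos)
    fix \<alpha> and u du :: "real \<Rightarrow> complex"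
    assume A: "0 \<le> \<alpha> \<and> \<alpha> \<le> 2 - \<epsilon> \<and> H1_alpha l \<alpha> u du"
    define W where "W = integral {0<..<l} (\<lambda>x. x powr \<alpha> * (cmod (du x))\<^sup>2)"
    have a: "0 \<le> \<alpha>" "\<alpha> \<le> \<gamma>" and H: "H1_alpha l \<alpha> u du" using A unfolding \<gamma>_def by auto
    have ui: "(\<lambda>x. (cmod (u x))\<^sup>2) integrable_on {0<..<l}" using H unfolding H1_alpha_def by auto
    have "integral {0<..<l} (\<lambda>x. (cmod (u x))\<^sup>2) \<le> integral {0<..<l} (\<lambda>x. (x powr (1-\<gamma>)/(\<gamma>-1) + l) * W)"
    proof (rule integral_le[OF ui])
      show "(\<lambda>x. (x powr (1-\<gamma>)/(\<gamma>-1) + l) * W) integrable_on {0<..<l}"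
        using has_integral_mult_left[OF Bint] by blast
      fix x assume "x \<in> {0<..<l}"
      then show "(cmod (u x))\<^sup>2 \<le> (x powr (1-\<gamma>)/(\<gamma>-1) + l) * W"
        using pointwise_bound[OF _ _ g1 a H] unfolding W_def by auto
    qed
    also have "\<dots> = C * W"
      by (rule integral_unique[OF has_integral_mult_left[OF Bint]])
    finally show "integral {0<..<l} (\<lambda>x. (cmod (u x))\<^sup>2) \<le> C * integral {0<..<l} (\<lambda>x. x powr \<alpha> * (cmod (du x))\<^sup>2)"
      unfolding W_def .
  qed
qed

end
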